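(* Let $R_1,R_2>0$, $s:=R_2-R_1$ and $\lambda:=2\sqrt{R_1R_2}$. There is a diffeomorphism $$F:(D_\lambda S^2,\ \mathrm{d}\alpha-s\pi^*\sigma)\to(S^2\times S^2\setminus\Delta,\ R_1\sigma\oplus R_2\sigma)$$ which is a symplectomorphism and is $\mathrm{SO}(3)$-equivariant, with moment maps related by $\mu_{D_\lambda S^2}=\mu_{S^2\times S^2}\circ F$. Consequently, with $E(x,v)=\tfrac12|v|^2$ and $H(N,S)=R_1R_2(1-N\cdot S)$, one has $H\circ F=\tfrac12\lambda^2-E$.
   Context: $S^2\subset\mathbb{R}^3$ is the unit sphere with the round metric, $TS^2=\{(x,v)\in\mathbb{R}^3\times\mathbb{R}^3: |x|=1,\ x\cdot v=0\}$, $D_\lambda S^2=\{(x,v)\in TS^2:|v|<\lambda\}$, $\pi(x,v)=x$, $\alpha_{(x,v)}(\xi)=v\cdot\mathrm{d}\pi(\xi)$, and $\sigma$ is the round area form, $\sigma_x(u,w)=x\cdot(u\times w)$. $\Delta\subset S^2\times S^2$ is the diagonal. $\mathrm{SO}(3)$ acts on $D_\lambda S^2$ by $g\cdot(x,v)=(gx,gv)$ and diagonally on $S^2\times S^2$. Identifying $\mathfrak{so}(3)\cong\mathbb{R}^3$, the moment maps (with convention $\omega(\rho(\xi),\cdot)=-\mathrm{d}\langle\mu,\xi\rangle$ for the generating vector field $\rho(\xi)$) are $\mu_{D_\lambda S^2}(x,v)=x\times v-sx$ and $\mu_{S^2\times S^2}(N,S)=R_1N+R_2S$. *)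

theory Defs
  imports "HOL-Analysis.Analysis"
begin

type_synonym r3 = "real^3"

fun Ck_on :: "nat \<Rightarrow> 'a::euclidean_space set \<Rightarrow> ('a \<Rightarrow> 'b::euclidean_space) \<Rightarrow> bool" where
  "Ck_on 0 U f = continuous_on U f"
| "Ck_on (Suc k) U f = (f differentiable_on U \<and>
      (\<forall>v. Ck_on k U (\<lambda>p. frechet_derivative f (at p) v)))"

definition smooth_on :: "'a::euclidean_space set \<Rightarrow> ('a \<Rightarrow> 'b::euclidean_space) \<Rightarrow> bool" where
  "smooth_on U f \<longleftrightarrow> (\<forall>k. Ck_on k U f)"

definition smooth_map_on :: "'a::euclidean_space set \<Rightarrow> ('a \<Rightarrow> 'b::euclidean_space) \<Rightarrow> bool" where
  "smooth_map_on A f \<longleftrightarrow> (\<exists>U g. open U \<and> A \<subseteq> U \<and> smooth_on U g \<and> (\<forall>p\<in>A. g p = f p))"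

definition diffeo_betw :: "('a::euclidean_space \<Rightarrow> 'b::euclidean_space) \<Rightarrow> 'a set \<Rightarrow> 'b set \<Rightarrow> bool" where
  "diffeo_betw f A B \<longleftrightarrow> bij_betw f A B \<and> smooth_map_on A f \<and> smooth_map_on B (inv_into A f)"

definition S2 :: "r3 set" where
  "S2 = {x. norm x = 1}"

definition TS2 :: "(r3 \<times> r3) set" where
  "TS2 = {(x, v). norm x = 1 \<and> x \<bullet> v = 0}"

definition disk_bundle :: "real \<Rightarrow> (r3 \<times> r3) set" where
  "disk_bundle lam = {(x, v). (x, v) \<in> TS2 \<and> norm v < lam}"

definition diag_S2 :: "(r3 \<times> r3) set" where
  "diag_S2 = {(N, S). N \<in> S2 \<and> S = N}"

definition S2xS2_minus_diag :: "(r3 \<times> r3) set" where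
  "S2xS2_minus_diag = (S2 \<times> S2) - diag_S2"

definition tangent_TS2 :: "r3 \<times> r3 \<Rightarrow> (r3 \<times> r3) set" where
  "tangent_TS2 p = {(u, w). fst p \<bullet> u = 0 \<and> u \<bullet> snd p + fst p \<bullet> w = 0}"

definition tangent_S2xS2 :: "r3 \<times> r3 \<Rightarrow> (r3 \<times> r3) set" where
  "tangent_S2xS2 p = {(a, b). fst p \<bullet> a = 0 \<and> snd p \<bullet> b = 0}"

definition sigma :: "r3 \<Rightarrow> r3 \<Rightarrow> r3 \<Rightarrow> real" where
  "sigma x u w = x \<bullet> (cross3 u w)"

text \<open>d alpha, with the sign convention under which the stated moment map
  x \<times> v - s x is correct: d alpha((u1,w1),(u2,w2)) = u1.w2 - u2.w1.\<close>
definition dalpha :: "r3 \<times> r3 \<Rightarrow> r3 \<times> r3 \<Rightarrow> r3 \<times> r3 \<Rightarrow> real" where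
  "dalpha p \<xi>1 \<xi>2 = fst \<xi>1 \<bullet> snd \<xi>2 - fst \<xi>2 \<bullet> snd \<xi>1"

definition omega_disk :: "real \<Rightarrow> r3 \<times> r3 \<Rightarrow> r3 \<times> r3 \<Rightarrow> r3 \<times> r3 \<Rightarrow> real" where
  "omega_disk s p \<xi>1 \<xi>2 = dalpha p \<xi>1 \<xi>2 - s * sigma (fst p) (fst \<xi>1) (fst \<xi>2)"

definition omega_prod :: "real \<Rightarrow> real \<Rightarrow> r3 \<times> r3 \<Rightarrow> r3 \<times> r3 \<Rightarrow> r3 \<times> r3 \<Rightarrow> real" where
  "omega_prod R1 R2 q \<eta>1 \<eta>2 =
     R1 * sigma (fst q) (fst \<eta>1) (fst \<eta>2) + R2 * sigma (snd q) (snd \<eta>1) (snd \<eta>2)"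

definition SO3 :: "(real^3^3) set" where
  "SO3 = {g. orthogonal_matrix g \<and> det g = 1}"

definition act :: "real^3^3 \<Rightarrow> r3 \<times> r3 \<Rightarrow> r3 \<times> r3" where
  "act g p = (g *v fst p, g *v snd p)"

definition mu_disk :: "real \<Rightarrow> r3 \<times> r3 \<Rightarrow> r3" where
  "mu_disk s p = cross3 (fst p) (snd p) - s *\<^sub>R fst p"

definition mu_prod :: "real \<Rightarrow> real \<Rightarrow> r3 \<times> r3 \<Rightarrow> r3" where
  "mu_prod R1 R2 q = R1 *\<^sub>R fst q + R2 *\<^sub>R snd q"

definition E_kin :: "r3 \<times> r3 \<Rightarrow> real" where
  "E_kin p = (norm (snd p))^2 / 2"

definition H_prod :: "real \<Rightarrow> real \<Rightarrow> r3 \<times> r3 \<Rightarrow> real" where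
  "H_prod R1 R2 q = R1 * R2 * (1 - fst q \<bullet> snd q)"

end

theory Submission
  imports Defs
begin


lemma Ck_cont: "Ck_on k U f \<Longrightarrow> continuous_on U f"
  by (cases k) (auto intro: differentiable_imp_continuous_on)

lemma Ck_Suc_imp: "Ck_on (Suc k) U f \<Longrightarrow> Ck_on k U f"
proof (induction k arbitrary: f)
  case 0 then show ?case by (auto intro: differentiable_imp_continuous_on)
next
  case (Suc k)
  from Suc.prems have "f differentiable_on U"
    and "\<forall>v. Ck_on (Suc k) U (\<lambda>p. frechet_derivative f (at p) v)" by auto
  with Suc.IH show ?case by simp
qed

lemma Ck_deriv:
  assumes "open U" "Ck_on (Suc k) U f" "p \<in> U"
  shows "(f has_derivative frechet_derivative f (at p)) (at p)"
proof -
  have "f differentiable (at p within U)" using assms by (auto simp: differentiable_on_def)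
  then have "f differentiable (at p)" using at_within_open[OF assms(3,1)] by simp
  then show ?thesis by (simp add: frechet_derivative_works[symmetric])
qed

lemma Ck_cong:
  assumes "open U" "\<And>p. p \<in> U \<Longrightarrow> f p = g p" "Ck_on k U f"
  shows "Ck_on k U g"
  using assms(2,3)
proof (induction k arbitrary: f g)
  case 0 then show ?case using continuous_on_cong by simp
next
  case (Suc k)
  have D: "(g has_derivative frechet_derivative f (at p)) (at p)" if "p \<in> U" for p
    using Ck_deriv[OF assms(1) Suc.prems(2) that] has_derivative_transform_within_open[OF _ assms(1) that]
      Suc.prems(1) by blast
  then have E: "frechet_derivative g (at p) = frechet_derivative f (at p)" if "p \<in> U" for p
    using that frechet_derivative_at by metis
  have "g differentiable_on U" unfolding differentiable_on_def
    using D by (blast intro: differentiable_at_withinI differentiableI)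
  moreover have "Ck_on k U (\<lambda>p. frechet_derivative g (at p) v)" for v
    using Suc.IH[of "\<lambda>p. frechet_derivative f (at p) v" "\<lambda>p. frechet_derivative g (at p) v"]
      Suc.prems E by auto
  ultimately show ?case by simp
qed

lemma Ck_SucI:
  assumes "open U" "\<And>p. p \<in> U \<Longrightarrow> (f has_derivative f' p) (at p)"
    "\<And>v. Ck_on k U (\<lambda>p. f' p v)"
  shows "Ck_on (Suc k) U f"
proof -
  have "f differentiable_on U" unfolding differentiable_on_def
    using assms(2) by (blast intro: differentiable_at_withinI differentiableI)
  moreover have "Ck_on k U (\<lambda>p. frechet_derivative f (at p) v)" for v
    by (rule Ck_cong[OF assms(1) _ assms(3)]) (simp add: frechet_derivative_at[OF assms(2)])
  ultimately show ?thesis by simp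
qed

lemma Ck_const:
  assumes "open U" shows "Ck_on k U (\<lambda>p. c)"
proof (induction k arbitrary: c)
  case 0 show ?case by simp
next
  case (Suc k)
  show ?case
  proof (rule Ck_SucI[where f'="\<lambda>p v. 0"])
    show "open U" by fact
    show "((\<lambda>p. c) has_derivative (\<lambda>v. 0)) (at p)" for p by (rule has_derivative_const)
    show "Ck_on k U (\<lambda>p. 0::'b)" for v :: 'a by (rule Suc.IH)
  qed
qed

lemma Ck_linear:
  assumes "open U" "bounded_linear L" shows "Ck_on k U L"
proof (cases k)
  case 0 then show ?thesis using assms by (simp add: linear_continuous_on)
next
  case (Suc k')
  have "Ck_on (Suc k') U L"
  proof (rule Ck_SucI[where f'="\<lambda>p. L"])
    show "open U" by fact
    show "(L has_derivative L) (at p)" for p by (rule bounded_linear_imp_has_derivative[OF assms(2)])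
    show "Ck_on k' U (\<lambda>p. L v)" for v by (rule Ck_const[OF assms(1)])
  qed
  then show ?thesis using Suc by simp
qed

lemma Ck_comp_linear:
  assumes "open U" "bounded_linear L"
  shows "Ck_on k U f \<Longrightarrow> Ck_on k U (\<lambda>p. L (f p))"
proof (induction k arbitrary: f)
  case 0 then show ?case
    using continuous_on_compose2[OF linear_continuous_on[OF assms(2)], of U f UNIV] by simp
next
  case (Suc k)
  show ?case
  proof (rule Ck_SucI[where f'="\<lambda>p v. L (frechet_derivative f (at p) v)"])
    show "open U" by fact
    show "((\<lambda>p. L (f p)) has_derivative (\<lambda>v. L (frechet_derivative f (at p) v))) (at p)" if "p \<in> U" for p
      using bounded_linear.has_derivative[OF assms(2) Ck_deriv[OF assms(1) Suc.prems that]] .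
    show "Ck_on k U (\<lambda>p. L (frechet_derivative f (at p) v))" for v
      using Suc.IH Suc.prems by simp
  qed
qed

lemma Ck_add:
  assumes "open U"
  shows "Ck_on k U f \<Longrightarrow> Ck_on k U g \<Longrightarrow> Ck_on k U (\<lambda>p. f p + g p)"
proof (induction k arbitrary: f g)
  case 0 then show ?case by (simp add: continuous_on_add)
next
  case (Suc k)
  show ?case
  proof (rule Ck_SucI[where f'="\<lambda>p v. frechet_derivative f (at p) v + frechet_derivative g (at p) v"])
    show "open U" by fact
    show "((\<lambda>p. f p + g p) has_derivative (\<lambda>v. frechet_derivative f (at p) v + frechet_derivative g (at p) v)) (at p)" if "p \<in> U" for p
      using has_derivative_add[OF Ck_deriv[OF assms(1) Suc.prems(1) that] Ck_deriv[OF assms(1) Suc.prems(2) that]] .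
    show "Ck_on k U (\<lambda>p. frechet_derivative f (at p) v + frechet_derivative g (at p) v)" for v
      using Suc.IH Suc.prems by simp
  qed
qed

lemma Ck_bilinear:
  assumes "open U" "bounded_bilinear bil"
  shows "Ck_on k U f \<Longrightarrow> Ck_on k U g \<Longrightarrow> Ck_on k U (\<lambda>p. bil (f p) (g p))"
proof (induction k arbitrary: f g)
  case 0 then show ?case by (simp add: bounded_bilinear.continuous_on[OF assms(2)])
next
  case (Suc k)
  show ?case
  proof (rule Ck_SucI[where f'="\<lambda>p v. bil (f p) (frechet_derivative g (at p) v) + bil (frechet_derivative f (at p) v) (g p)"])
    show "open U" by fact
    show "((\<lambda>p. bil (f p) (g p)) has_derivative (\<lambda>v. bil (f p) (frechet_derivative g (at p) v) + bil (frechet_derivative f (at p) v) (g p))) (at p)" if "p \<in> U" for p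
      using bounded_bilinear.FDERIV[OF assms(2) Ck_deriv[OF assms(1) Suc.prems(1) that] Ck_deriv[OF assms(1) Suc.prems(2) that]] .
    show "Ck_on k U (\<lambda>p. bil (f p) (frechet_derivative g (at p) v) + bil (frechet_derivative f (at p) v) (g p))" for v
      using Suc.prems Ck_Suc_imp[OF Suc.prems(1)] Ck_Suc_imp[OF Suc.prems(2)]
      by (intro Ck_add[OF assms(1)] Suc.IH) auto
  qed
qed

lemma Ck_pair:
  assumes "open U"
  shows "Ck_on k U f \<Longrightarrow> Ck_on k U g \<Longrightarrow> Ck_on k U (\<lambda>p. (f p, g p))"
proof (induction k arbitrary: f g)
  case 0 then show ?case by (simp add: continuous_on_Pair)
next
  case (Suc k)
  show ?case
  proof (rule Ck_SucI[where f'="\<lambda>p v. (frechet_derivative f (at p) v, frechet_derivative g (at p) v)"])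
    show "open U" by fact
    show "((\<lambda>p. (f p, g p)) has_derivative (\<lambda>v. (frechet_derivative f (at p) v, frechet_derivative g (at p) v))) (at p)" if "p \<in> U" for p
      using has_derivative_Pair[OF Ck_deriv[OF assms(1) Suc.prems(1) that] Ck_deriv[OF assms(1) Suc.prems(2) that]] .
    show "Ck_on k U (\<lambda>p. (frechet_derivative f (at p) v, frechet_derivative g (at p) v))" for v
      using Suc.IH Suc.prems by simp
  qed
qed

lemma Ck_mult:
  fixes f g :: "'a::euclidean_space \<Rightarrow> real"
  shows "open U \<Longrightarrow> Ck_on k U f \<Longrightarrow> Ck_on k U g \<Longrightarrow> Ck_on k U (\<lambda>p. f p * g p)"
  using Ck_bilinear[OF _ bounded_bilinear_mult] by blast

lemma Ck_scaleR:
  fixes f :: "'a::euclidean_space \<Rightarrow> real"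
  shows "open U \<Longrightarrow> Ck_on k U f \<Longrightarrow> Ck_on k U g \<Longrightarrow> Ck_on k U (\<lambda>p. f p *\<^sub>R g p)"
  using Ck_bilinear[OF _ bounded_bilinear_scaleR] by blast

lemma Ck_inner:
  shows "open U \<Longrightarrow> Ck_on k U f \<Longrightarrow> Ck_on k U g \<Longrightarrow> Ck_on k U (\<lambda>p. inner (f p) (g p))"
  using Ck_bilinear[OF _ bounded_bilinear_inner] by blast

lemma bounded_bilinear_cross: "bounded_bilinear cross3"
  using bilinear_cross bilinear_conv_bounded_bilinear by blast

lemma Ck_cross:
  shows "open U \<Longrightarrow> Ck_on k U f \<Longrightarrow> Ck_on k U g \<Longrightarrow> Ck_on k U (\<lambda>p. cross3 (f p) (g p))"
  using Ck_bilinear[OF _ bounded_bilinear_cross] by blast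

lemma Ck_neg:
  shows "open U \<Longrightarrow> Ck_on k U f \<Longrightarrow> Ck_on k U (\<lambda>p. - f p)"
  using Ck_comp_linear[OF _ bounded_linear_minus[OF bounded_linear_ident]] by blast

lemma Ck_diff:
  shows "open U \<Longrightarrow> Ck_on k U f \<Longrightarrow> Ck_on k U g \<Longrightarrow> Ck_on k U (\<lambda>p. f p - g p)"
  using Ck_add[of U k f "\<lambda>p. - g p"] Ck_neg by fastforce

lemma Ck_inverse:
  fixes f :: "'a::euclidean_space \<Rightarrow> real"
  assumes "open U" "\<And>p. p \<in> U \<Longrightarrow> f p \<noteq> 0"
  shows "Ck_on k U f \<Longrightarrow> Ck_on k U (\<lambda>p. inverse (f p))"
proof (induction k)
  case 0 then show ?case using assms(2) by (simp add: continuous_on_inverse)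
next
  case (Suc k)
  show ?case
  proof (rule Ck_SucI[where f'="\<lambda>p v. - (inverse (f p) * frechet_derivative f (at p) v * inverse (f p))"])
    show "open U" by fact
    show "((\<lambda>p. inverse (f p)) has_derivative (\<lambda>v. - (inverse (f p) * frechet_derivative f (at p) v * inverse (f p)))) (at p)" if "p \<in> U" for p
      using Deriv.has_derivative_inverse[OF assms(2)[OF that] Ck_deriv[OF assms(1) Suc.prems that]] .
    show "Ck_on k U (\<lambda>p. - (inverse (f p) * frechet_derivative f (at p) v * inverse (f p)))" for v
      using Suc.IH[OF Ck_Suc_imp[OF Suc.prems]] Suc.prems
      by (intro Ck_neg Ck_mult assms(1)) auto
  qed
qed

lemma Ck_sqrt:
  fixes f :: "'a::euclidean_space \<Rightarrow> real"
  assumes "open U" "\<And>p. p \<in> U \<Longrightarrow> f p > 0"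
  shows "Ck_on k U f \<Longrightarrow> Ck_on k U (\<lambda>p. sqrt (f p))"
proof (induction k)
  case 0 then show ?case by (simp add: continuous_on_real_sqrt)
next
  case (Suc k)
  show ?case
  proof (rule Ck_SucI[where f'="\<lambda>p v. frechet_derivative f (at p) v * (inverse (sqrt (f p)) / 2)"])
    show "open U" by fact
    show "((\<lambda>p. sqrt (f p)) has_derivative (\<lambda>v. frechet_derivative f (at p) v * (inverse (sqrt (f p)) / 2))) (at p)" if "p \<in> U" for p
      using DERIV_compose_FDERIV[OF DERIV_real_sqrt[OF assms(2)[OF that]] Ck_deriv[OF assms(1) Suc.prems that]] .
    have S: "Ck_on k U (\<lambda>p. sqrt (f p))" using Suc.IH[OF Ck_Suc_imp[OF Suc.prems]] .
    have "Ck_on k U (\<lambda>p. inverse (sqrt (f p)) * (1/2))"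
    proof -
      have "\<And>p. p \<in> U \<Longrightarrow> sqrt (f p) \<noteq> 0" using assms(2) by (smt (verit) real_sqrt_gt_zero)
      from Ck_inverse[OF assms(1) this S] show ?thesis by (intro Ck_mult assms(1) Ck_const)
    qed
    then have I: "Ck_on k U (\<lambda>p. inverse (sqrt (f p)) / 2)"
      by (rule Ck_cong[OF assms(1), rotated]) simp
    show "Ck_on k U (\<lambda>p. frechet_derivative f (at p) v * (inverse (sqrt (f p)) / 2))" for v
      using Suc.prems I by (intro Ck_mult assms(1)) auto
  qed
qed


definition ka :: "real \<Rightarrow> real \<Rightarrow> real \<Rightarrow> real" where
  "ka a b q = (q^2 + 2*a*q + 2*a*(a-b)) / (2*a*(a+b+q))"
definition kb :: "real \<Rightarrow> real \<Rightarrow> real \<Rightarrow> real" where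
  "kb a b q = (2*a+q) / (2*a*(a+b+q))"
definition ka' :: "real \<Rightarrow> real \<Rightarrow> real \<Rightarrow> real" where
  "ka' a b q = ((2*q+2*a)*(a+b+q) - (q^2 + 2*a*q + 2*a*(a-b))) / (2*a*(a+b+q)^2)"
definition kb' :: "real \<Rightarrow> real \<Rightarrow> real \<Rightarrow> real" where
  "kb' a b q = (b - a) / (2*a*(a+b+q)^2)"


lemma K1: assumes "a > 0" "b > 0" "q \<ge> 0" shows "a * ka a b q - b * ka b a q = a - b"
proof -
  define D where "D = a+b+q"
  have h: "a \<noteq> 0" "b \<noteq> 0" "D \<noteq> 0" using assms by (auto simp: D_def)
  have e: "a+b+q = D" "b+a+q = D" by (auto simp: D_def)
  show ?thesis unfolding ka_def e apply (simp add: field_simps h) apply (simp_all add: D_def) apply (algebra)? done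
qed

lemma K2: assumes "a > 0" "b > 0" "q \<ge> 0" shows "a * kb a b q + b * kb b a q = 1"
proof -
  define D where "D = a+b+q"
  have h: "a \<noteq> 0" "b \<noteq> 0" "D \<noteq> 0" using assms by (auto simp: D_def)
  have e: "a+b+q = D" "b+a+q = D" by (auto simp: D_def)
  show ?thesis unfolding kb_def e apply (simp add: field_simps h) apply (simp_all add: D_def) apply (algebra)? done
qed

lemma K3: assumes "a > 0" "b > 0" "q \<ge> 0" shows "(ka a b q)^2 + (kb a b q)^2 * (4*a*b - q^2) = 1"
proof -
  define D where "D = a+b+q"
  have h: "a \<noteq> 0" "b \<noteq> 0" "D \<noteq> 0" using assms by (auto simp: D_def)
  have e: "a+b+q = D" "b+a+q = D" by (auto simp: D_def)
  show ?thesis unfolding ka_def kb_def e apply (simp add: field_simps h) apply (simp_all add: D_def) apply (algebra)? done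
qed

lemma K4: assumes "a > 0" "b > 0" "q \<ge> 0" shows
   "a*b*(1 - (ka a b q * (- ka b a q) + kb a b q * kb b a q * (4*a*b - q^2))) = q^2/2"
proof -
  define D where "D = a+b+q"
  have h: "a \<noteq> 0" "b \<noteq> 0" "D \<noteq> 0" using assms by (auto simp: D_def)
  have e: "a+b+q = D" "b+a+q = D" by (auto simp: D_def)
  show ?thesis unfolding ka_def kb_def e apply (simp add: field_simps h) apply (simp_all add: D_def) apply (algebra)? done
qed


definition al :: "real \<Rightarrow> real \<Rightarrow> real \<Rightarrow> real" where
  "al a b q = (2*b+q)*a/(q*(a+b+q))"
definition be :: "real \<Rightarrow> real \<Rightarrow> real \<Rightarrow> real" where
  "be a b q = (2*a+q)*b/(q*(a+b+q))"
definition gam :: "real \<Rightarrow> real \<Rightarrow> real \<Rightarrow> real" where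
  "gam a b q = ka a b q * kb a b q - ((4*a*b - q^2)/q) * (ka a b q * kb' a b q - kb a b q * ka' a b q)"

lemma be_al: "be a b q = al b a q" unfolding al_def be_def by (simp add: ac_simps)

lemma K5a: assumes "a > 0" "b > 0" "q > 0" shows "al a b q * ka a b q + be a b q * ka b a q = 1"
proof -
  define D where "D = a+b+q"
  have h: "a \<noteq> 0" "b \<noteq> 0" "D \<noteq> 0" "q \<noteq> 0" using assms by (auto simp: D_def)
  have e: "a+b+q = D" "b+a+q = D" by (auto simp: D_def)
  show ?thesis unfolding al_def be_def ka_def kb_def e apply (simp add: field_simps h) apply (simp_all add: D_def) apply (algebra)? done
qed

lemma K5b: assumes "a > 0" "b > 0" "q > 0" shows "al a b q * kb a b q - be a b q * kb b a q = 0"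
proof -
  define D where "D = a+b+q"
  have h: "a \<noteq> 0" "b \<noteq> 0" "D \<noteq> 0" "q \<noteq> 0" using assms by (auto simp: D_def)
  have e: "a+b+q = D" "b+a+q = D" by (auto simp: D_def)
  show ?thesis unfolding al_def be_def ka_def kb_def e by (simp add: field_simps h)
qed

lemma K6a: assumes "a > 0" "b > 0" "q > 0" shows "(ka a b q + (b-a) * kb a b q) * al a b q + kb a b q * a = 1"
proof -
  define D where "D = a+b+q"
  have h: "a \<noteq> 0" "b \<noteq> 0" "D \<noteq> 0" "q \<noteq> 0" using assms by (auto simp: D_def)
  have e: "a+b+q = D" "b+a+q = D" by (auto simp: D_def)
  show ?thesis unfolding al_def be_def ka_def kb_def e apply (simp add: field_simps h) apply (simp_all add: D_def) apply (algebra)? done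
qed

lemma K6b: assumes "a > 0" "b > 0" "q > 0" shows "- (ka a b q + (b-a) * kb a b q) * be a b q + kb a b q * b = 0"
proof -
  define D where "D = a+b+q"
  have h: "a \<noteq> 0" "b \<noteq> 0" "D \<noteq> 0" "q \<noteq> 0" using assms by (auto simp: D_def)
  have e: "a+b+q = D" "b+a+q = D" by (auto simp: D_def)
  show ?thesis unfolding al_def be_def ka_def kb_def e apply (simp add: field_simps h) apply (simp_all add: D_def) apply (algebra)? done
qed

lemma K6c: assumes "a > 0" "b > 0" "q > 0" shows "(- ka b a q + (b-a) * kb b a q) * al a b q + kb b a q * a = 0"
proof -
  define D where "D = a+b+q"
  have h: "a \<noteq> 0" "b \<noteq> 0" "D \<noteq> 0" "q \<noteq> 0" using assms by (auto simp: D_def)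
  have e: "a+b+q = D" "b+a+q = D" by (auto simp: D_def)
  show ?thesis unfolding al_def be_def ka_def kb_def e apply (simp add: field_simps h) apply (simp_all add: D_def) apply (algebra)? done
qed

lemma K6d: assumes "a > 0" "b > 0" "q > 0" shows "- (- ka b a q + (b-a) * kb b a q) * be a b q + kb b a q * b = 1"
proof -
  define D where "D = a+b+q"
  have h: "a \<noteq> 0" "b \<noteq> 0" "D \<noteq> 0" "q \<noteq> 0" using assms by (auto simp: D_def)
  have e: "a+b+q = D" "b+a+q = D" by (auto simp: D_def)
  show ?thesis unfolding al_def be_def ka_def kb_def e apply (simp add: field_simps h) apply (simp_all add: D_def) apply (algebra)? done
qed

lemma K7: assumes "a > 0" "b > 0" "q > 0" shows "(al a b q)^2 - 2 * al a b q * be a b q * (1 - q^2/(2*a*b)) + (be a b q)^2 = 1"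
proof -
  define D where "D = a+b+q"
  have h: "a \<noteq> 0" "b \<noteq> 0" "D \<noteq> 0" "q \<noteq> 0" using assms by (auto simp: D_def)
  have e: "a+b+q = D" "b+a+q = D" by (auto simp: D_def)
  show ?thesis unfolding al_def be_def ka_def kb_def e apply (simp add: field_simps h) apply (simp_all add: D_def) apply (algebra)? done
qed

lemma K8: assumes "a > 0" "b > 0" "q > 0" shows "a * al a b q - b * be a b q + (b * al a b q - a * be a b q) * (1 - q^2/(2*a*b)) = a - b"
proof -
  define D where "D = a+b+q"
  have h: "a \<noteq> 0" "b \<noteq> 0" "D \<noteq> 0" "q \<noteq> 0" using assms by (auto simp: D_def)
  have e: "a+b+q = D" "b+a+q = D" by (auto simp: D_def)
  show ?thesis unfolding al_def be_def ka_def kb_def e apply (simp add: field_simps h) apply (simp_all add: D_def) apply (algebra)? done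
qed

lemma K9a: assumes "a > 0" "b > 0" "q > 0" shows "a * ka a b q * gam a b q + b * ka b a q * gam b a q = 1"
proof -
  define D where "D = a+b+q"
  have h: "a \<noteq> 0" "b \<noteq> 0" "D \<noteq> 0" "q \<noteq> 0" using assms by (auto simp: D_def)
  have e: "a+b+q = D" "b+a+q = D" by (auto simp: D_def)
  show ?thesis unfolding gam_def ka_def kb_def ka'_def kb'_def e apply (simp add: field_simps h) apply (simp_all add: D_def) apply (algebra)? done
qed

lemma K9b: assumes "a > 0" "b > 0" "q > 0" shows "a * kb a b q * gam a b q - b * kb b a q * gam b a q = 0"
proof -
  define D where "D = a+b+q"
  have h: "a \<noteq> 0" "b \<noteq> 0" "D \<noteq> 0" "q \<noteq> 0" using assms by (auto simp: D_def)
  have e: "a+b+q = D" "b+a+q = D" by (auto simp: D_def)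
  show ?thesis unfolding gam_def ka_def kb_def ka'_def kb'_def e apply (simp add: field_simps h) apply (simp_all add: D_def) apply (algebra)? done
qed

lemma ka_deriv: assumes "a > 0" "b > 0" "q \<ge> 0" shows "(ka a b has_field_derivative ka' a b q) (at q)"
proof -
  have f: "((\<lambda>q. q^2 + 2*a*q + 2*a*(a-b)) has_real_derivative (2*q + 2*a)) (at q)"
    by (auto intro!: derivative_eq_intros)
  have g: "((\<lambda>q. 2*a*(a+b+q)) has_real_derivative (2*a)) (at q)"
    by (auto intro!: derivative_eq_intros)
  have nz: "2*a*(a+b+q) \<noteq> 0" using assms by auto
  have d: "((\<lambda>q. (q^2 + 2*a*q + 2*a*(a-b)) / (2*a*(a+b+q))) has_real_derivative
     ((2*q + 2*a) * (2*a*(a+b+q)) - (q^2 + 2*a*q + 2*a*(a-b)) * (2*a)) / ((2*a*(a+b+q)) * (2*a*(a+b+q)))) (at q)"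
    using DERIV_divide[OF f g nz] .
  define D where "D = a+b+q"
  have h: "a \<noteq> 0" "D \<noteq> 0" using assms by (auto simp: D_def)
  have e: "((2*q + 2*a) * (2*a*(a+b+q)) - (q^2 + 2*a*q + 2*a*(a-b)) * (2*a)) / ((2*a*(a+b+q)) * (2*a*(a+b+q))) = ka' a b q"
    unfolding ka'_def D_def[symmetric] using h by (simp add: field_simps power2_eq_square)
  have "ka a b = (\<lambda>q. (q^2 + 2*a*q + 2*a*(a-b)) / (2*a*(a+b+q)))" by (rule ext) (simp add: ka_def)
  then show ?thesis using d e by simp
qed

lemma kb_deriv: assumes "a > 0" "b > 0" "q \<ge> 0" shows "(kb a b has_field_derivative kb' a b q) (at q)"
proof -
  have f: "((\<lambda>q. 2*a+q) has_real_derivative 1) (at q)"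
    by (auto intro!: derivative_eq_intros)
  have g: "((\<lambda>q. 2*a*(a+b+q)) has_real_derivative (2*a)) (at q)"
    by (auto intro!: derivative_eq_intros)
  have nz: "2*a*(a+b+q) \<noteq> 0" using assms by auto
  have d: "((\<lambda>q. (2*a+q) / (2*a*(a+b+q))) has_real_derivative
     (1 * (2*a*(a+b+q)) - (2*a+q) * (2*a)) / ((2*a*(a+b+q)) * (2*a*(a+b+q)))) (at q)"
    using DERIV_divide[OF f g nz] .
  define D where "D = a+b+q"
  have h: "a \<noteq> 0" "D \<noteq> 0" using assms by (auto simp: D_def)
  have e: "(1 * (2*a*(a+b+q)) - (2*a+q) * (2*a)) / ((2*a*(a+b+q)) * (2*a*(a+b+q))) = kb' a b q"
    unfolding kb'_def D_def[symmetric] using h apply (simp add: field_simps power2_eq_square) apply (simp add: D_def) apply (algebra)? done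
  have "kb a b = (\<lambda>q. (2*a+q) / (2*a*(a+b+q)))" by (rule ext) (simp add: kb_def)
  then show ?thesis using d e by simp
qed


lemma cross_cross_l: "cross3 (cross3 a b) c = (a \<bullet> c) *\<^sub>R b - (b \<bullet> c) *\<^sub>R a"
  by (simp add: cross3_simps forall_3)
lemma cross_cross_r: "cross3 a (cross3 b c) = (a \<bullet> c) *\<^sub>R b - (a \<bullet> b) *\<^sub>R c"
  by (simp add: cross3_simps forall_3)
lemma cross_diff_left: "cross3 (a - b) c = cross3 a c - cross3 b c"
  by (simp add: cross3_simps)
lemma cross_inner_self: "cross3 a b \<bullet> cross3 a b = (a \<bullet> a) * (b \<bullet> b) - (a \<bullet> b)^2"
  by (simp add: cross3_simps power2_eq_square)
lemma cross_inner_self': "cross3 b a \<bullet> a = 0" "a \<bullet> cross3 a b = 0" "cross3 a b \<bullet> a = 0" "b \<bullet> cross3 a b = 0"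
  by (simp_all add: cross3_simps)

definition qf :: "real \<Rightarrow> real \<Rightarrow> r3 \<Rightarrow> real" where
  "qf R1 R2 v = sqrt (4*R1*R2 - v \<bullet> v)"

definition Fm :: "real \<Rightarrow> real \<Rightarrow> r3 \<times> r3 \<Rightarrow> r3 \<times> r3" where
  "Fm R1 R2 p = (ka R1 R2 (qf R1 R2 (snd p)) *\<^sub>R fst p + kb R1 R2 (qf R1 R2 (snd p)) *\<^sub>R cross3 (fst p) (snd p),
     (- ka R2 R1 (qf R1 R2 (snd p))) *\<^sub>R fst p + kb R2 R1 (qf R1 R2 (snd p)) *\<^sub>R cross3 (fst p) (snd p))"

definition DFm :: "real \<Rightarrow> real \<Rightarrow> r3 \<times> r3 \<Rightarrow> r3 \<times> r3 \<Rightarrow> r3 \<times> r3" where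
  "DFm R1 R2 p \<xi> = (let q = qf R1 R2 (snd p); dq = - (snd p \<bullet> snd \<xi>) / q in
    ((ka' R1 R2 q * dq) *\<^sub>R fst p + ka R1 R2 q *\<^sub>R fst \<xi> + (kb' R1 R2 q * dq) *\<^sub>R cross3 (fst p) (snd p)
       + kb R1 R2 q *\<^sub>R (cross3 (fst \<xi>) (snd p) + cross3 (fst p) (snd \<xi>)),
     (- ka' R2 R1 q * dq) *\<^sub>R fst p + (- ka R2 R1 q) *\<^sub>R fst \<xi> + (kb' R2 R1 q * dq) *\<^sub>R cross3 (fst p) (snd p)
       + kb R2 R1 q *\<^sub>R (cross3 (fst \<xi>) (snd p) + cross3 (fst p) (snd \<xi>))))"

definition qg :: "real \<Rightarrow> real \<Rightarrow> r3 \<times> r3 \<Rightarrow> real" where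
  "qg R1 R2 p = sqrt (2*R1*R2*(1 - fst p \<bullet> snd p))"

definition Xg :: "real \<Rightarrow> real \<Rightarrow> r3 \<times> r3 \<Rightarrow> r3" where
  "Xg R1 R2 p = al R1 R2 (qg R1 R2 p) *\<^sub>R fst p - be R1 R2 (qg R1 R2 p) *\<^sub>R snd p"

definition Gm :: "real \<Rightarrow> real \<Rightarrow> r3 \<times> r3 \<Rightarrow> r3 \<times> r3" where
  "Gm R1 R2 p = (Xg R1 R2 p, cross3 (R1 *\<^sub>R fst p + R2 *\<^sub>R snd p) (Xg R1 R2 p))"

lemma qf_pos:
  assumes "R1 > 0" "R2 > 0" "v \<bullet> v < 4*R1*R2"
  shows "qf R1 R2 v > 0" "v \<bullet> v = 4*R1*R2 - (qf R1 R2 v)^2"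
  using assms by (simp_all add: qf_def)

lemma F_N: assumes "R1 > 0" "R2 > 0" "x \<bullet> x = 1" "x \<bullet> v = 0" "v \<bullet> v < 4*R1*R2"
  shows "fst (Fm R1 R2 (x,v)) \<bullet> fst (Fm R1 R2 (x,v)) = 1"
    and "snd (Fm R1 R2 (x,v)) \<bullet> snd (Fm R1 R2 (x,v)) = 1"
    and "R1 * R2 * (1 - fst (Fm R1 R2 (x,v)) \<bullet> snd (Fm R1 R2 (x,v))) = (qf R1 R2 v)^2 / 2"
proof -
  define q where "q = qf R1 R2 v"
  have q: "q > 0" "v \<bullet> v = 4*R1*R2 - q^2" using qf_pos[OF assms(1,2,5)] by (auto simp: q_def)
  have y: "x \<bullet> cross3 x v = 0" "cross3 x v \<bullet> x = 0" "cross3 x v \<bullet> cross3 x v = v \<bullet> v"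
    using assms by (simp_all add: cross_inner_self cross_inner_self')
  have "fst (Fm R1 R2 (x,v)) \<bullet> fst (Fm R1 R2 (x,v)) = (ka R1 R2 q)^2 + (kb R1 R2 q)^2 * (4*R1*R2 - q^2)"
    by (simp add: Fm_def q_def[symmetric] inner_add_left inner_add_right y assms q power2_eq_square)
  also have "\<dots> = 1" using K3[of R1 R2 q] q assms by simp
  finally show "fst (Fm R1 R2 (x,v)) \<bullet> fst (Fm R1 R2 (x,v)) = 1" .
  have "snd (Fm R1 R2 (x,v)) \<bullet> snd (Fm R1 R2 (x,v)) = (ka R2 R1 q)^2 + (kb R2 R1 q)^2 * (4*R2*R1 - q^2)"
    by (simp add: Fm_def q_def[symmetric] inner_add_left inner_add_right inner_diff_left inner_diff_right y assms q power2_eq_square mult_ac)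
  also have "\<dots> = 1" using K3[of R2 R1 q] q assms by simp
  finally show "snd (Fm R1 R2 (x,v)) \<bullet> snd (Fm R1 R2 (x,v)) = 1" .
  have "R1 * R2 * (1 - fst (Fm R1 R2 (x,v)) \<bullet> snd (Fm R1 R2 (x,v))) =
     R1*R2*(1 - (ka R1 R2 q * (- ka R2 R1 q) + kb R1 R2 q * kb R2 R1 q * (4*R1*R2 - q^2)))"
    by (simp add: Fm_def q_def[symmetric] inner_add_left inner_add_right y assms q power2_eq_square algebra_simps)
  also have "\<dots> = q^2/2" using K4[of R1 R2 q] q assms by simp
  finally show "R1 * R2 * (1 - fst (Fm R1 R2 (x,v)) \<bullet> snd (Fm R1 R2 (x,v))) = (qf R1 R2 v)^2 / 2"
    by (simp add: q_def)
qed

lemma F_mu: assumes "R1 > 0" "R2 > 0" "v \<bullet> v \<le> 4*R1*R2"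
  shows "R1 *\<^sub>R fst (Fm R1 R2 (x,v)) + R2 *\<^sub>R snd (Fm R1 R2 (x,v)) = cross3 x v - (R2 - R1) *\<^sub>R x"
proof -
  define q where "q = qf R1 R2 v"
  have q: "q \<ge> 0" using assms by (simp add: q_def qf_def)
  have "R1 *\<^sub>R fst (Fm R1 R2 (x,v)) + R2 *\<^sub>R snd (Fm R1 R2 (x,v)) =
     (R1 * ka R1 R2 q - R2 * ka R2 R1 q) *\<^sub>R x + (R1 * kb R1 R2 q + R2 * kb R2 R1 q) *\<^sub>R cross3 x v"
    by (simp add: Fm_def q_def[symmetric] algebra_simps)
  also have "\<dots> = (R1 - R2) *\<^sub>R x + cross3 x v" using K1[OF assms(1,2) q] K2[OF assms(1,2) q] by simp
  finally show ?thesis by (simp add: algebra_simps)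
qed


lemma GF: assumes "R1 > 0" "R2 > 0" "x \<bullet> x = 1" "x \<bullet> v = 0" "v \<bullet> v < 4*R1*R2"
  shows "Gm R1 R2 (Fm R1 R2 (x,v)) = (x, v)"
proof -
  define q where "q = qf R1 R2 v"
  have q: "q > 0" "v \<bullet> v = 4*R1*R2 - q^2" using qf_pos[OF assms(1,2,5)] by (auto simp: q_def)
  have H: "R1 * R2 * (1 - fst (Fm R1 R2 (x,v)) \<bullet> snd (Fm R1 R2 (x,v))) = q^2 / 2"
    using F_N(3)[OF assms] by (simp add: q_def)
  have e: "2*R1*R2*(1 - fst (Fm R1 R2 (x,v)) \<bullet> snd (Fm R1 R2 (x,v))) = q^2"
  proof -
    have "2*R1*R2*(1 - fst (Fm R1 R2 (x,v)) \<bullet> snd (Fm R1 R2 (x,v)))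
       = 2*(R1*R2*(1 - fst (Fm R1 R2 (x,v)) \<bullet> snd (Fm R1 R2 (x,v))))" by simp
    also have "\<dots> = q^2" using H by simp
    finally show ?thesis .
  qed
  have "qg R1 R2 (Fm R1 R2 (x,v)) = sqrt (q^2)"
    unfolding qg_def e ..
  then have qg: "qg R1 R2 (Fm R1 R2 (x,v)) = q" using q by simp
  have "Xg R1 R2 (Fm R1 R2 (x,v)) = (al R1 R2 q * ka R1 R2 q + be R1 R2 q * ka R2 R1 q) *\<^sub>R x
        + (al R1 R2 q * kb R1 R2 q - be R1 R2 q * kb R2 R1 q) *\<^sub>R cross3 x v"
    unfolding Xg_def qg by (simp add: Fm_def q_def[symmetric] algebra_simps)
  also have "\<dots> = x" using K5a[OF assms(1,2) q(1)] K5b[OF assms(1,2) q(1)] by simp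
  finally have X: "Xg R1 R2 (Fm R1 R2 (x,v)) = x" .
  have mu: "R1 *\<^sub>R fst (Fm R1 R2 (x,v)) + R2 *\<^sub>R snd (Fm R1 R2 (x,v)) = cross3 x v - (R2 - R1) *\<^sub>R x"
    using F_mu[OF assms(1,2)] assms(5) by simp
  have "cross3 (cross3 x v - (R2 - R1) *\<^sub>R x) x = v"
    using assms(3,4) by (simp add: cross_diff_left cross_mult_left cross_cross_l inner_commute)
  then show ?thesis unfolding Gm_def X mu by simp
qed

lemma FG: assumes "R1 > 0" "R2 > 0" "N \<bullet> N = 1" "S \<bullet> S = 1" "N \<noteq> S"
  shows "fst (Gm R1 R2 (N,S)) \<bullet> fst (Gm R1 R2 (N,S)) = 1"
    and "fst (Gm R1 R2 (N,S)) \<bullet> snd (Gm R1 R2 (N,S)) = 0"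
    and "snd (Gm R1 R2 (N,S)) \<bullet> snd (Gm R1 R2 (N,S)) < 4*R1*R2"
    and "Fm R1 R2 (Gm R1 R2 (N,S)) = (N, S)"
proof -
  define c where "c = N \<bullet> S"
  have "(N - S) \<bullet> (N - S) > 0" using assms(5) by simp
  then have c1: "c < 1" using assms(3,4) by (simp add: c_def inner_diff_left inner_diff_right inner_commute)
  define q where "q = qg R1 R2 (N,S)"
  have qq: "q^2 = 2*R1*R2*(1 - c)" using assms c1 by (simp add: q_def qg_def c_def)
  have q: "q > 0" using assms c1 by (simp add: q_def qg_def c_def)
  have c: "c = 1 - q^2/(2*R1*R2)" using qq assms by (simp add: field_simps)
  define X where "X = Xg R1 R2 (N,S)"
  define T where "T = R1 *\<^sub>R N + R2 *\<^sub>R S"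
  have Xd: "X = al R1 R2 q *\<^sub>R N - be R1 R2 q *\<^sub>R S" by (simp add: X_def Xg_def q_def)
  have G: "Gm R1 R2 (N,S) = (X, cross3 T X)" by (simp add: Gm_def X_def T_def)
  have NS: "S \<bullet> N = c" by (simp add: c_def inner_commute)
  have "X \<bullet> X = (al R1 R2 q)^2 - 2 * al R1 R2 q * be R1 R2 q * c + (be R1 R2 q)^2"
    unfolding Xd by (simp add: inner_diff_left inner_diff_right assms NS c_def[symmetric] power2_eq_square algebra_simps)
  also have "\<dots> = 1" using K7[OF assms(1,2) q] by (simp add: c)
  finally have XX: "X \<bullet> X = 1" .
  have "T \<bullet> X = R1 * al R1 R2 q - R2 * be R1 R2 q + (R2 * al R1 R2 q - R1 * be R1 R2 q) * c"
    unfolding Xd T_def by (simp add: inner_diff_left inner_diff_right inner_add_left inner_add_right assms NS c_def[symmetric] algebra_simps)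
  also have "\<dots> = R1 - R2" using K8[OF assms(1,2) q] by (simp add: c)
  finally have TX: "T \<bullet> X = R1 - R2" .
  have TT: "T \<bullet> T = R1^2 + R2^2 + 2*R1*R2*c"
    unfolding T_def by (simp add: inner_add_left inner_add_right assms NS c_def[symmetric] algebra_simps power2_eq_square)
  have VV: "cross3 T X \<bullet> cross3 T X = 4*R1*R2 - q^2"
    unfolding cross_inner_self XX TT TX using qq by (simp add: algebra_simps power2_eq_square)
  show "fst (Gm R1 R2 (N,S)) \<bullet> fst (Gm R1 R2 (N,S)) = 1" using G XX by simp
  show "fst (Gm R1 R2 (N,S)) \<bullet> snd (Gm R1 R2 (N,S)) = 0" using G by (simp add: cross_inner_self')
  show "snd (Gm R1 R2 (N,S)) \<bullet> snd (Gm R1 R2 (N,S)) < 4*R1*R2" using G VV q by simp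
  have qf: "qf R1 R2 (cross3 T X) = q" unfolding qf_def VV using q by simp
  have XV: "cross3 X (cross3 T X) = T - (R1 - R2) *\<^sub>R X"
    by (simp add: cross_cross_r XX inner_commute TX)
  have "fst (Fm R1 R2 (X, cross3 T X)) = ((ka R1 R2 q + (R2-R1) * kb R1 R2 q) * al R1 R2 q + kb R1 R2 q * R1) *\<^sub>R N
      + (- (ka R1 R2 q + (R2-R1) * kb R1 R2 q) * be R1 R2 q + kb R1 R2 q * R2) *\<^sub>R S"
    unfolding Fm_def fst_conv snd_conv qf XV unfolding Xd T_def by (simp add: algebra_simps)
  also have "\<dots> = N" using K6a[OF assms(1,2) q] K6b[OF assms(1,2) q] by simp
  finally have 1: "fst (Fm R1 R2 (X, cross3 T X)) = N" .
  have "snd (Fm R1 R2 (X, cross3 T X)) = ((- ka R2 R1 q + (R2-R1) * kb R2 R1 q) * al R1 R2 q + kb R2 R1 q * R1) *\<^sub>R N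
      + (- (- ka R2 R1 q + (R2-R1) * kb R2 R1 q) * be R1 R2 q + kb R2 R1 q * R2) *\<^sub>R S"
    unfolding Fm_def fst_conv snd_conv qf XV unfolding Xd T_def by (simp add: algebra_simps)
  also have "\<dots> = S" using K6c[OF assms(1,2) q] K6d[OF assms(1,2) q] by simp
  finally have 2: "snd (Fm R1 R2 (X, cross3 T X)) = S" .
  show "Fm R1 R2 (Gm R1 R2 (N,S)) = (N, S)" unfolding G using 1 2 by (metis prod.collapse)
qed


definition rotlike :: "(r3 \<Rightarrow> r3) \<Rightarrow> bool" where
  "rotlike g \<longleftrightarrow> (\<forall>a b. g (a + b) = g a + g b) \<and> (\<forall>c a. g (c *\<^sub>R a) = c *\<^sub>R g a) \<and>
     (\<forall>a b. g a \<bullet> g b = a \<bullet> b) \<and> (\<forall>a b. cross3 (g a) (g b) = g (cross3 a b))"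

lemma rot_props: assumes "rotlike g"
  shows "g (a + b) = g a + g b" "g (c *\<^sub>R a) = c *\<^sub>R g a" "g a \<bullet> g b = a \<bullet> b"
    "cross3 (g a) (g b) = g (cross3 a b)" "g (a - b) = g a - g b" "g (- a) = - g a"
proof -
  show 1: "g (a + b) = g a + g b" "g (c *\<^sub>R a) = c *\<^sub>R g a" "g a \<bullet> g b = a \<bullet> b"
    "cross3 (g a) (g b) = g (cross3 a b)" for a b c using assms unfolding rotlike_def by auto
  have neg: "g (- a) = - g a" for a using 1(2)[of "-1" a] by simp
  show "g (- a) = - g a" by (rule neg)
  show "g (a - b) = g a - g b" using 1(1)[of a "-b"] neg[of b] by simp
qed

lemma rot_F: "rotlike g \<Longrightarrow> Fm R1 R2 (g x, g v) = (g (fst (Fm R1 R2 (x,v))), g (snd (Fm R1 R2 (x,v))))"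
  by (simp add: Fm_def qf_def rot_props)

lemma rot_DF: "rotlike g \<Longrightarrow> DFm R1 R2 (g x, g v) (g u, g w) =
   (g (fst (DFm R1 R2 (x,v) (u,w))), g (snd (DFm R1 R2 (x,v) (u,w))))"
  by (simp add: DFm_def qf_def Let_def rot_props)

lemma rot_omega_prod: "rotlike g \<Longrightarrow>
  omega_prod R1 R2 (g N, g S) (g a1, g b1) (g a2, g b2) = omega_prod R1 R2 (N,S) (a1,b1) (a2,b2)"
  unfolding rotlike_def by (simp add: omega_prod_def sigma_def)

lemma rot_omega_disk: "rotlike g \<Longrightarrow>
  omega_disk s (g x, g v) (g u1, g w1) (g u2, g w2) = omega_disk s (x,v) (u1,w1) (u2,w2)"
  unfolding rotlike_def by (simp add: omega_disk_def sigma_def dalpha_def)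

lemma SO3_rotlike: assumes "g \<in> SO3" shows "rotlike ((*v) g)"
proof -
  have o: "orthogonal_matrix g" "det g = 1" using assms by (auto simp: SO3_def)
  have "orthogonal_transformation ((*v) g)"
    using o by (simp add: orthogonal_transformation_matrix)
  then have i: "\<forall>a b. (g *v a) \<bullet> (g *v b) = a \<bullet> b" by (simp add: orthogonal_transformation_def)
  have r: "rotation_matrix g" using o by (simp add: rotation_matrix_def)
  show ?thesis unfolding rotlike_def
    using i cross_rotation_matrix[OF r] by (simp add: matrix_vector_right_distrib matrix_vector_mult_scaleR)
qed

lemma exists_perp: fixes x :: r3 assumes "x \<bullet> x = 1" shows "\<exists>e. e \<bullet> e = 1 \<and> x \<bullet> e = 0"
proof -
  define a :: r3 where "a = vector [1,0,0]"
  define b :: r3 where "b = vector [0,1,0]"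
  have "cross3 x a \<noteq> 0 \<or> cross3 x b \<noteq> 0"
  proof (rule ccontr)
    assume "\<not> ?thesis"
    then have "cross3 x a = 0" "cross3 x b = 0" by auto
    then have "x = 0" unfolding a_def b_def by (simp add: cross3_simps forall_3)
    then show False using assms by simp
  qed
  then obtain c where c: "c \<noteq> 0" "x \<bullet> c = 0" by (metis cross_inner_self'(2))
  show ?thesis
    by (rule exI[of _ "(1 / norm c) *\<^sub>R c"]) (use c in \<open>simp add: power2_norm_eq_inner[symmetric] field_simps\<close>)
qed

lemma frame: fixes x v :: r3 assumes "x \<bullet> x = 1" "x \<bullet> v = 0"
  obtains e where "e \<bullet> e = 1" "x \<bullet> e = 0" "v = norm v *\<^sub>R e"
proof (cases "v = 0")
  case True
  then show ?thesis using exists_perp[OF assms(1)] that by auto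
next
  case False
  show ?thesis
    by (rule that[of "(1 / norm v) *\<^sub>R v"]) (use False assms in \<open>simp_all add: power2_norm_eq_inner[symmetric] field_simps\<close>)
qed

definition gmap :: "r3 \<Rightarrow> r3 \<Rightarrow> r3 \<Rightarrow> r3" where
  "gmap x e a = (a$1) *\<^sub>R x + (a$2) *\<^sub>R e + (a$3) *\<^sub>R cross3 x e"

lemma gmap_rot: assumes "x \<bullet> x = 1" "e \<bullet> e = 1" "x \<bullet> e = 0"
  shows "rotlike (gmap x e)"
proof -
  let ?f = "cross3 x e"
  have t: "e \<bullet> x = 0" "x \<bullet> ?f = 0" "?f \<bullet> x = 0" "e \<bullet> ?f = 0" "?f \<bullet> e = 0" "?f \<bullet> ?f = 1"
    using assms by (simp_all add: cross_inner_self' cross_inner_self inner_commute)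
  have c: "cross3 x x = 0" "cross3 e e = 0" "cross3 ?f ?f = 0" "cross3 e x = - ?f"
     "cross3 x ?f = - e" "cross3 ?f x = e" "cross3 e ?f = x" "cross3 ?f e = - x"
    using assms t by (simp_all add: cross_cross_l cross_cross_r inner_commute cross_skew[of e x])
  have add: "gmap x e (a + b) = gmap x e a + gmap x e b" for a b
    by (simp add: gmap_def algebra_simps)
  have sc: "gmap x e (k *\<^sub>R a) = k *\<^sub>R gmap x e a" for k a
    by (simp add: gmap_def algebra_simps)
  have inn: "gmap x e a \<bullet> gmap x e b = a \<bullet> b" for a b
  proof -
    have "gmap x e a \<bullet> gmap x e b = a$1*b$1 + a$2*b$2 + a$3*b$3"
      by (simp add: gmap_def inner_add_left inner_add_right assms t algebra_simps)
    also have "\<dots> = a \<bullet> b" by (simp add: inner_vec_def sum_3)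
    finally show ?thesis .
  qed
  have cr: "cross3 (gmap x e a) (gmap x e b) = gmap x e (cross3 a b)" for a b
    by (simp add: gmap_def cross_add_left cross_add_right cross_mult_left cross_mult_right c cross_components algebra_simps)
  show ?thesis unfolding rotlike_def using add sc inn cr by blast
qed

lemma gmap_decomp: assumes "x \<bullet> x = 1" "e \<bullet> e = 1" "x \<bullet> e = 0"
  shows "gmap x e (vector [x \<bullet> z, e \<bullet> z, cross3 x e \<bullet> z]) = z"
proof -
  let ?f = "cross3 x e"
  have t: "e \<bullet> x = 0" "x \<bullet> ?f = 0" "?f \<bullet> x = 0" "e \<bullet> ?f = 0" "?f \<bullet> e = 0" "?f \<bullet> ?f = 1"
    using assms by (simp_all add: cross_inner_self' cross_inner_self inner_commute)
  define z' where "z' = z - gmap x e (vector [x \<bullet> z, e \<bullet> z, cross3 x e \<bullet> z])"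
  have o: "x \<bullet> z' = 0" "e \<bullet> z' = 0" "?f \<bullet> z' = 0"
    by (simp_all add: z'_def gmap_def inner_add_right inner_diff_right assms t)
  have "cross3 ?f z' = 0" by (simp add: cross_cross_l o)
  then have "z' = 0" using o(3) norm_and_cross_eq_0[of ?f z'] t(6) by auto
  then show ?thesis by (simp add: z'_def)
qed


definition partf :: "real \<Rightarrow> real \<Rightarrow> real \<Rightarrow> real \<Rightarrow> real \<Rightarrow> real \<Rightarrow> real \<Rightarrow> real \<Rightarrow> real \<Rightarrow> real \<Rightarrow> real \<Rightarrow> real \<Rightarrow> real \<Rightarrow> real \<Rightarrow> real" where
  "partf A B A' B' r k a2 a3 b2 b3 c2 c3 d2 d3 =
    (A^2 + B^2 * r^2) * (A * (a2*c3 - a3*c2) + B * (a3*d3 - b3*c3))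
    + (A*(B + B'*k*r) - B*r*A'*k) * (A * (a2*d2 - b2*c2) + B * (b2*d3 - b3*d2))"

definition dNf :: "real \<Rightarrow> real \<Rightarrow> real \<Rightarrow> real \<Rightarrow> real \<Rightarrow> r3 \<Rightarrow> r3 \<Rightarrow> r3 \<Rightarrow> r3 \<Rightarrow> r3" where
  "dNf A B A' B' dq x v u w = (A' * dq) *\<^sub>R x + A *\<^sub>R u + (B' * dq) *\<^sub>R cross3 x v + B *\<^sub>R (cross3 u v + cross3 x w)"

lemma poly_id:
  fixes A B A' B' r k a2 a3 b2 b3 c2 c3 d2 d3 :: real
  defines "x0 \<equiv> vector [1,0,0] :: r3" and "v0 \<equiv> vector [0,r,0] :: r3"
    and "u1 \<equiv> vector [0,a2,a3] :: r3" and "w1 \<equiv> vector [-(r*a2),b2,b3] :: r3"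
    and "u2 \<equiv> vector [0,c2,c3] :: r3" and "w2 \<equiv> vector [-(r*c2),d2,d3] :: r3"
  shows "(A *\<^sub>R x0 + B *\<^sub>R cross3 x0 v0) \<bullet> cross3 (dNf A B A' B' (k*b2) x0 v0 u1 w1) (dNf A B A' B' (k*d2) x0 v0 u2 w2)
     = partf A B A' B' r k a2 a3 b2 b3 c2 c3 d2 d3"
  unfolding partf_def dNf_def assms
  by (simp add: inner_vec_def sum_3 cross_components power2_eq_square algebra_simps)


lemma core:
  fixes R1 R2 r a2 a3 b2 b3 c2 c3 d2 d3 :: real
  assumes "R1 > 0" "R2 > 0" "r \<ge> 0" "r^2 < 4*R1*R2"
  defines "x0 \<equiv> vector [1,0,0] :: r3" and "v0 \<equiv> vector [0,r,0] :: r3"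
    and "u1 \<equiv> vector [0,a2,a3] :: r3" and "w1 \<equiv> vector [-(r*a2),b2,b3] :: r3"
    and "u2 \<equiv> vector [0,c2,c3] :: r3" and "w2 \<equiv> vector [-(r*c2),d2,d3] :: r3"
  shows "omega_prod R1 R2 (Fm R1 R2 (x0,v0)) (DFm R1 R2 (x0,v0) (u1,w1)) (DFm R1 R2 (x0,v0) (u2,w2))
     = omega_disk (R2-R1) (x0,v0) (u1,w1) (u2,w2)"
proof -
  define q where "q = qf R1 R2 v0"
  have vv: "v0 \<bullet> v0 = r^2" by (simp add: v0_def inner_vec_def sum_3 power2_eq_square)
  have q: "q > 0" "r^2 = 4*R1*R2 - q^2" using qf_pos[of R1 R2 v0] assms(1,2,4) vv by (auto simp: q_def)
  define k where "k = -(r/q)"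
  have vw1: "v0 \<bullet> w1 = r * b2" by (simp add: v0_def w1_def inner_vec_def sum_3)
  have vw2: "v0 \<bullet> w2 = r * d2" by (simp add: v0_def w2_def inner_vec_def sum_3)
  define A where "A = ka R1 R2 q"
  define B where "B = kb R1 R2 q"
  define C where "C = - ka R2 R1 q"
  define D where "D = kb R2 R1 q"
  define A' where "A' = ka' R1 R2 q"
  define B' where "B' = kb' R1 R2 q"
  define C' where "C' = - ka' R2 R1 q"
  define D' where "D' = kb' R2 R1 q"
  have F: "Fm R1 R2 (x0,v0) = (A *\<^sub>R x0 + B *\<^sub>R cross3 x0 v0, C *\<^sub>R x0 + D *\<^sub>R cross3 x0 v0)"
    by (simp add: Fm_def q_def[symmetric] A_def B_def C_def D_def)
  have D1: "DFm R1 R2 (x0,v0) (u1,w1) = (dNf A B A' B' (k*b2) x0 v0 u1 w1, dNf C D C' D' (k*b2) x0 v0 u1 w1)"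
    by (simp add: DFm_def Let_def q_def[symmetric] dNf_def vw1 k_def A_def B_def C_def D_def A'_def B'_def C'_def D'_def)
  have D2: "DFm R1 R2 (x0,v0) (u2,w2) = (dNf A B A' B' (k*d2) x0 v0 u2 w2, dNf C D C' D' (k*d2) x0 v0 u2 w2)"
    by (simp add: DFm_def Let_def q_def[symmetric] dNf_def vw2 k_def A_def B_def C_def D_def A'_def B'_def C'_def D'_def)
  have L: "omega_prod R1 R2 (Fm R1 R2 (x0,v0)) (DFm R1 R2 (x0,v0) (u1,w1)) (DFm R1 R2 (x0,v0) (u2,w2))
      = R1 * partf A B A' B' r k a2 a3 b2 b3 c2 c3 d2 d3 + R2 * partf C D C' D' r k a2 a3 b2 b3 c2 c3 d2 d3"
    unfolding F D1 D2 omega_prod_def sigma_def fst_conv snd_conv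
    unfolding x0_def v0_def u1_def w1_def u2_def w2_def poly_id ..
  have n1: "A^2 + B^2 * r^2 = 1" using K3[of R1 R2 q] assms q by (simp add: A_def B_def)
  have n2: "C^2 + D^2 * r^2 = 1" using K3[of R2 R1 q] assms q by (simp add: C_def D_def mult_ac)
  define G1 where "G1 = A*(B + B'*k*r) - B*r*A'*k"
  define G2 where "G2 = C*(D + D'*k*r) - D*r*C'*k"
  have kr: "k * r = - (4*R1*R2 - q^2) / q" unfolding k_def using q by (simp add: power2_eq_square field_simps)
  have g1: "G1 = gam R1 R2 q"
  proof -
    have "G1 = A*B + (k*r) * (A*B' - B*A')" by (simp add: G1_def algebra_simps)
    then show ?thesis unfolding kr gam_def A_def B_def A'_def B'_def using q by (simp add: field_simps)
  qed
  have g2: "G2 = - gam R2 R1 q"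
  proof -
    have "G2 = C*D + (k*r) * (C*D' - D*C')" by (simp add: G2_def algebra_simps)
    then show ?thesis unfolding kr gam_def C_def D_def C'_def D'_def using q by (simp add: field_simps)
  qed
  have m1: "R1*A + R2*C = R1 - R2" using K1[of R1 R2 q] assms q by (simp add: A_def C_def)
  have m2: "R1*B + R2*D = 1" using K2[of R1 R2 q] assms q by (simp add: B_def D_def)
  have h1: "R1*A*G1 + R2*C*G2 = 1" using K9a[of R1 R2 q] assms q by (simp add: A_def C_def g1 g2)
  have h2: "R1*B*G1 + R2*D*G2 = 0" using K9b[of R1 R2 q] assms q by (simp add: B_def D_def g1 g2)
  have "R1 * partf A B A' B' r k a2 a3 b2 b3 c2 c3 d2 d3 + R2 * partf C D C' D' r k a2 a3 b2 b3 c2 c3 d2 d3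
     = (R1*A + R2*C) * (a2*c3 - a3*c2) + (R1*B + R2*D) * (a3*d3 - b3*c3)
       + (R1*A*G1 + R2*C*G2) * (a2*d2 - b2*c2) + (R1*B*G1 + R2*D*G2) * (b2*d3 - b3*d2)"
    unfolding partf_def n1 n2 G1_def[symmetric] G2_def[symmetric] by (simp add: algebra_simps)
  also have "\<dots> = (R1 - R2) * (a2*c3 - a3*c2) + (a3*d3 - b3*c3) + (a2*d2 - b2*c2)"
    unfolding m1 m2 h1 h2 by simp
  also have "\<dots> = omega_disk (R2-R1) (x0,v0) (u1,w1) (u2,w2)"
    unfolding omega_disk_def dalpha_def sigma_def x0_def u1_def w1_def u2_def w2_def
    by (simp add: inner_vec_def sum_3 cross_components algebra_simps)
  finally show ?thesis using L by simp
qed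


lemma has_derivative_eq_fun: "(f has_derivative f') F \<Longrightarrow> (\<And>h. f' h = g' h) \<Longrightarrow> (f has_derivative g') F"
  by (metis ext)

lemma Fm_lam: "Fm R1 R2 = (\<lambda>p. (ka R1 R2 (qf R1 R2 (snd p)) *\<^sub>R fst p + kb R1 R2 (qf R1 R2 (snd p)) *\<^sub>R cross3 (fst p) (snd p),
     (- ka R2 R1 (qf R1 R2 (snd p))) *\<^sub>R fst p + kb R2 R1 (qf R1 R2 (snd p)) *\<^sub>R cross3 (fst p) (snd p)))"
  by (rule ext) (rule Fm_def)

lemma DF_works:
  assumes "R1 > 0" "R2 > 0" "snd p \<bullet> snd p < 4*R1*R2"
  shows "(Fm R1 R2 has_derivative DFm R1 R2 p) (at p)"
proof -
  define q where "q = qf R1 R2 (snd p)"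
  have qpos: "q > 0" using qf_pos[OF assms] by (simp add: q_def)
  have Fs: "(fst has_derivative fst) (at p)" by (rule bounded_linear_imp_has_derivative[OF bounded_linear_fst])
  have Sn: "(snd has_derivative snd) (at p)" by (rule bounded_linear_imp_has_derivative[OF bounded_linear_snd])
  have I: "((\<lambda>p. snd p \<bullet> snd p) has_derivative (\<lambda>h. snd p \<bullet> snd h + snd h \<bullet> snd p)) (at p)"
    using bounded_bilinear.FDERIV[OF bounded_bilinear_inner Sn Sn] .
  have T: "((\<lambda>p. 4*R1*R2 - snd p \<bullet> snd p) has_derivative (\<lambda>h. 0 - (snd p \<bullet> snd h + snd h \<bullet> snd p))) (at p)"
    using has_derivative_diff[OF has_derivative_const I] .
  have tpos: "0 < 4*R1*R2 - snd p \<bullet> snd p" using assms by simp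
  have Q0: "((\<lambda>p. sqrt (4*R1*R2 - snd p \<bullet> snd p)) has_derivative
      (\<lambda>h. (0 - (snd p \<bullet> snd h + snd h \<bullet> snd p)) * (inverse (sqrt (4*R1*R2 - snd p \<bullet> snd p)) / 2))) (at p)"
    using DERIV_compose_FDERIV[OF DERIV_real_sqrt[OF tpos] T] .
  have Q: "((\<lambda>p. qf R1 R2 (snd p)) has_derivative (\<lambda>h. - (snd p \<bullet> snd h) / q)) (at p)"
  proof (rule has_derivative_eq_fun)
    show "((\<lambda>p. qf R1 R2 (snd p)) has_derivative
      (\<lambda>h. (0 - (snd p \<bullet> snd h + snd h \<bullet> snd p)) * (inverse (sqrt (4*R1*R2 - snd p \<bullet> snd p)) / 2))) (at p)"
      using Q0 by (simp add: qf_def)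
    show "(0 - (snd p \<bullet> snd h + snd h \<bullet> snd p)) * (inverse (sqrt (4*R1*R2 - snd p \<bullet> snd p)) / 2) = - (snd p \<bullet> snd h) / q" for h
      by (simp add: q_def qf_def inner_commute field_simps)
  qed
  have q0: "qf R1 R2 (snd p) \<ge> 0" using qpos by (simp add: q_def)
  have KA1: "((\<lambda>p. ka R1 R2 (qf R1 R2 (snd p))) has_derivative (\<lambda>h. - (snd p \<bullet> snd h) / q * ka' R1 R2 q)) (at p)"
    using DERIV_compose_FDERIV[OF ka_deriv[OF assms(1,2) q0] Q] by (simp add: q_def)
  have KB1: "((\<lambda>p. kb R1 R2 (qf R1 R2 (snd p))) has_derivative (\<lambda>h. - (snd p \<bullet> snd h) / q * kb' R1 R2 q)) (at p)"
    using DERIV_compose_FDERIV[OF kb_deriv[OF assms(1,2) q0] Q] by (simp add: q_def)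
  have KA2: "((\<lambda>p. - ka R2 R1 (qf R1 R2 (snd p))) has_derivative (\<lambda>h. - (- (snd p \<bullet> snd h) / q * ka' R2 R1 q))) (at p)"
    using has_derivative_minus[OF DERIV_compose_FDERIV[OF ka_deriv[OF assms(2,1) q0] Q]] by (simp add: q_def)
  have KB2: "((\<lambda>p. kb R2 R1 (qf R1 R2 (snd p))) has_derivative (\<lambda>h. - (snd p \<bullet> snd h) / q * kb' R2 R1 q)) (at p)"
    using DERIV_compose_FDERIV[OF kb_deriv[OF assms(2,1) q0] Q] by (simp add: q_def)
  have CR: "((\<lambda>p. cross3 (fst p) (snd p)) has_derivative (\<lambda>h. cross3 (fst p) (snd h) + cross3 (fst h) (snd p))) (at p)"
    using bounded_bilinear.FDERIV[OF bounded_bilinear_cross Fs Sn] .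
  note D0 = has_derivative_Pair[OF has_derivative_add[OF has_derivative_scaleR[OF KA1 Fs] has_derivative_scaleR[OF KB1 CR]]
      has_derivative_add[OF has_derivative_scaleR[OF KA2 Fs] has_derivative_scaleR[OF KB2 CR]]]
  show ?thesis unfolding Fm_lam
    by (rule has_derivative_eq_fun[OF D0]) (simp add: DFm_def Let_def q_def[symmetric] algebra_simps)
qed


lemma ka_alt: "ka a b t = (t * t + 2*a*t + 2*a*(a-b)) * inverse (2*a*(a+b+t))"
  unfolding ka_def power2_eq_square divide_inverse ..
lemma kb_alt: "kb a b t = (2*a + t) * inverse (2*a*(a+b+t))"
  unfolding kb_def divide_inverse ..
lemma al_alt: "al a b t = ((2*b + t) * a) * inverse (t*(a+b+t))"
  unfolding al_def divide_inverse ..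
lemma be_alt: "be a b t = ((2*a + t) * b) * inverse (t*(a+b+t))"
  unfolding be_def divide_inverse ..

lemma Ck_ka: assumes "open U" "a > 0" "b > 0" "\<And>p. p \<in> U \<Longrightarrow> h p \<ge> 0" "Ck_on k U h"
  shows "Ck_on k U (\<lambda>p. ka a b (h p))" "Ck_on k U (\<lambda>p. kb a b (h p))"
proof -
  have nz: "2*a*(a+b+h p) \<noteq> 0" if "p \<in> U" for p
  proof -
    have "a+b+h p > 0" using assms(2,3) assms(4)[OF that] by linarith
    then show ?thesis using assms(2) by simp
  qed
  have d0: "Ck_on k U (\<lambda>p. 2*a*(a+b+h p))"
    by (intro Ck_mult Ck_add Ck_const assms(1) assms(5))
  have den: "Ck_on k U (\<lambda>p. inverse (2*a*(a+b+h p)))"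
  proof (rule Ck_inverse[where f="\<lambda>p. 2*a*(a+b+h p)"])
    show "open U" by (rule assms(1))
    show "2*a*(a+b+h p) \<noteq> 0" if "p \<in> U" for p using nz[OF that] .
    show "Ck_on k U (\<lambda>p. 2*a*(a+b+h p))" by (rule d0)
  qed
  have hh: "Ck_on k U (\<lambda>p. h p * h p)" by (rule Ck_mult[OF assms(1) assms(5) assms(5)])
  have ah: "Ck_on k U (\<lambda>p. 2*a*h p)" by (rule Ck_mult[OF assms(1) Ck_const[OF assms(1)] assms(5)])
  have n0: "Ck_on k U (\<lambda>p. h p * h p + 2*a*h p + 2*a*(a-b))"
    by (rule Ck_add[OF assms(1) Ck_add[OF assms(1) hh ah] Ck_const[OF assms(1)]])
  have "Ck_on k U (\<lambda>p. (h p * h p + 2*a*h p + 2*a*(a-b)) * inverse (2*a*(a+b+h p)))"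
    by (rule Ck_mult[OF assms(1) n0 den])
  then show "Ck_on k U (\<lambda>p. ka a b (h p))"
    by (rule Ck_cong[OF assms(1), rotated]) (simp only: ka_alt)
  have "Ck_on k U (\<lambda>p. (2*a + h p) * inverse (2*a*(a+b+h p)))"
    by (intro Ck_mult Ck_add Ck_const assms(1) assms(5) den)
  then show "Ck_on k U (\<lambda>p. kb a b (h p))"
    by (rule Ck_cong[OF assms(1), rotated]) (simp only: kb_alt)
qed

lemma Ck_al: assumes "open U" "a > 0" "b > 0" "\<And>p. p \<in> U \<Longrightarrow> h p > 0" "Ck_on k U h"
  shows "Ck_on k U (\<lambda>p. al a b (h p))" "Ck_on k U (\<lambda>p. be a b (h p))"
proof -
  have nz: "h p * (a+b+h p) \<noteq> 0" if "p \<in> U" for p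
  proof -
    have "a+b+h p > 0" using assms(2,3) assms(4)[OF that] by linarith
    then show ?thesis using assms(4)[OF that] by simp
  qed
  have d0: "Ck_on k U (\<lambda>p. h p * (a+b+h p))"
    by (intro Ck_mult Ck_add Ck_const assms(1) assms(5))
  have den: "Ck_on k U (\<lambda>p. inverse (h p * (a+b+h p)))"
  proof (rule Ck_inverse[where f="\<lambda>p. h p * (a+b+h p)"])
    show "open U" by (rule assms(1))
    show "h p * (a+b+h p) \<noteq> 0" if "p \<in> U" for p using nz[OF that] .
    show "Ck_on k U (\<lambda>p. h p * (a+b+h p))" by (rule d0)
  qed
  have "Ck_on k U (\<lambda>p. ((2*b + h p) * a) * inverse (h p * (a+b+h p)))"
    by (intro Ck_mult Ck_add Ck_const assms(1) assms(5) den)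
  then show "Ck_on k U (\<lambda>p. al a b (h p))"
    by (rule Ck_cong[OF assms(1), rotated]) (simp only: al_alt)
  have "Ck_on k U (\<lambda>p. ((2*a + h p) * b) * inverse (h p * (a+b+h p)))"
    by (intro Ck_mult Ck_add Ck_const assms(1) assms(5) den)
  then show "Ck_on k U (\<lambda>p. be a b (h p))"
    by (rule Ck_cong[OF assms(1), rotated]) (simp only: be_alt)
qed

lemma open_U: "open {p :: r3 \<times> r3. snd p \<bullet> snd p < c}"
  by (rule open_Collect_less) (auto intro!: continuous_intros)

lemma open_V: "open {p :: r3 \<times> r3. fst p \<bullet> snd p < 1}"
  by (rule open_Collect_less) (auto intro!: continuous_intros)

lemma Fm_smooth: assumes "R1 > 0" "R2 > 0"
  shows "smooth_on {p. snd p \<bullet> snd p < 4*R1*R2} (Fm R1 R2)"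
  unfolding smooth_on_def
proof
  fix k
  define U where "U = {p :: r3 \<times> r3. snd p \<bullet> snd p < 4*R1*R2}"
  have oU: "open U" unfolding U_def by (rule open_U)
  have Fs: "Ck_on k U (\<lambda>p. fst p)" using Ck_linear[OF oU bounded_linear_fst] by simp
  have Sn: "Ck_on k U (\<lambda>p. snd p)" using Ck_linear[OF oU bounded_linear_snd] by simp
  have t: "Ck_on k U (\<lambda>p. 4*R1*R2 - snd p \<bullet> snd p)"
    by (intro Ck_diff Ck_const Ck_inner oU Sn)
  have tp: "\<And>p. p \<in> U \<Longrightarrow> 0 < 4*R1*R2 - snd p \<bullet> snd p" by (simp add: U_def)
  have "Ck_on k U (\<lambda>p. sqrt (4*R1*R2 - snd p \<bullet> snd p))" by (rule Ck_sqrt[OF oU tp t])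
  then have Q: "Ck_on k U (\<lambda>p. qf R1 R2 (snd p))" by (simp add: qf_def)
  have Qp: "qf R1 R2 (snd p) \<ge> 0" if "p \<in> U" for p
  proof -
    have "0 < 4*R1*R2 - snd p \<bullet> snd p" by (rule tp[OF that])
    then show ?thesis by (simp add: qf_def)
  qed
  note A = Ck_ka[OF oU assms(1,2) Qp Q] and B = Ck_ka[OF oU assms(2,1) Qp Q]
  have "Ck_on k U (\<lambda>p. (ka R1 R2 (qf R1 R2 (snd p)) *\<^sub>R fst p + kb R1 R2 (qf R1 R2 (snd p)) *\<^sub>R cross3 (fst p) (snd p),
     (- ka R2 R1 (qf R1 R2 (snd p))) *\<^sub>R fst p + kb R2 R1 (qf R1 R2 (snd p)) *\<^sub>R cross3 (fst p) (snd p)))"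
    by (intro Ck_pair Ck_add Ck_scaleR Ck_neg Ck_cross oU Fs Sn A B)
  then show "Ck_on k {p. snd p \<bullet> snd p < 4*R1*R2} (Fm R1 R2)" unfolding Fm_lam U_def .
qed

lemma Gm_lam: "Gm R1 R2 = (\<lambda>p. (al R1 R2 (qg R1 R2 p) *\<^sub>R fst p - be R1 R2 (qg R1 R2 p) *\<^sub>R snd p,
    cross3 (R1 *\<^sub>R fst p + R2 *\<^sub>R snd p) (al R1 R2 (qg R1 R2 p) *\<^sub>R fst p - be R1 R2 (qg R1 R2 p) *\<^sub>R snd p)))"
  by (rule ext) (simp add: Gm_def Xg_def)

lemma Gm_smooth: assumes "R1 > 0" "R2 > 0"
  shows "smooth_on {p. fst p \<bullet> snd p < 1} (Gm R1 R2)"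
  unfolding smooth_on_def
proof
  fix k
  define U where "U = {p :: r3 \<times> r3. fst p \<bullet> snd p < 1}"
  have oU: "open U" unfolding U_def by (rule open_V)
  have Fs: "Ck_on k U (\<lambda>p. fst p)" using Ck_linear[OF oU bounded_linear_fst] by simp
  have Sn: "Ck_on k U (\<lambda>p. snd p)" using Ck_linear[OF oU bounded_linear_snd] by simp
  have t: "Ck_on k U (\<lambda>p. 2*R1*R2*(1 - fst p \<bullet> snd p))"
    by (intro Ck_mult Ck_diff Ck_const Ck_inner oU Sn Fs)
  have tp: "\<And>p. p \<in> U \<Longrightarrow> 0 < 2*R1*R2*(1 - fst p \<bullet> snd p)" using assms by (simp add: U_def)
  have "Ck_on k U (\<lambda>p. sqrt (2*R1*R2*(1 - fst p \<bullet> snd p)))" by (rule Ck_sqrt[OF oU tp t])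
  then have Q: "Ck_on k U (\<lambda>p. qg R1 R2 p)" by (simp add: qg_def)
  have Qp: "\<And>p. p \<in> U \<Longrightarrow> qg R1 R2 p > 0" using tp by (simp add: qg_def)
  note A = Ck_al[OF oU assms(1,2) Qp Q]
  have "Ck_on k U (\<lambda>p. (al R1 R2 (qg R1 R2 p) *\<^sub>R fst p - be R1 R2 (qg R1 R2 p) *\<^sub>R snd p,
    cross3 (R1 *\<^sub>R fst p + R2 *\<^sub>R snd p) (al R1 R2 (qg R1 R2 p) *\<^sub>R fst p - be R1 R2 (qg R1 R2 p) *\<^sub>R snd p)))"
    by (intro Ck_pair Ck_add Ck_diff Ck_scaleR Ck_cross Ck_const oU Fs Sn A)
  then show "Ck_on k {p. fst p \<bullet> snd p < 1} (Gm R1 R2)" unfolding Gm_lam U_def .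
qed


lemma sympl:
  fixes x v u1 w1 u2 w2 :: r3
  assumes "R1 > 0" "R2 > 0" "x \<bullet> x = 1" "x \<bullet> v = 0" "v \<bullet> v < 4*R1*R2"
    "x \<bullet> u1 = 0" "u1 \<bullet> v + x \<bullet> w1 = 0" "x \<bullet> u2 = 0" "u2 \<bullet> v + x \<bullet> w2 = 0"
  shows "omega_prod R1 R2 (Fm R1 R2 (x,v)) (DFm R1 R2 (x,v) (u1,w1)) (DFm R1 R2 (x,v) (u2,w2))
     = omega_disk (R2-R1) (x,v) (u1,w1) (u2,w2)"
proof -
  obtain e where e: "e \<bullet> e = 1" "x \<bullet> e = 0" "v = norm v *\<^sub>R e" using frame[OF assms(3,4)] by blast
  define g where "g = gmap x e"
  define f where "f = cross3 x e"
  have rot: "rotlike g" using gmap_rot[OF assms(3) e(1,2)] by (simp add: g_def)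
  define r where "r = norm v"
  define cz :: "r3 \<Rightarrow> r3" where "cz = (\<lambda>z. vector [x \<bullet> z, e \<bullet> z, f \<bullet> z])"
  have dec: "g (cz z) = z" for z using gmap_decomp[OF assms(3) e(1,2)] by (simp add: g_def cz_def f_def)
  define x0 :: r3 where "x0 = vector [1,0,0]"
  define v0 :: r3 where "v0 = vector [0,r,0]"
  have gx: "g x0 = x" by (simp add: g_def gmap_def x0_def)
  have gv: "g v0 = v" using e(3) by (simp add: g_def gmap_def r_def v0_def)
  have vr: "v = r *\<^sub>R e" using e(3) by (simp add: r_def)
  have r0: "r \<ge> 0" by (simp add: r_def)
  have rr: "r^2 < 4*R1*R2" using assms(5) by (simp add: r_def power2_norm_eq_inner)
  have cu: "cz u = vector [0, e \<bullet> u, f \<bullet> u]" if "x \<bullet> u = 0" for u using that by (simp add: cz_def)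
  have cw: "cz w = vector [-(r * (e \<bullet> u)), e \<bullet> w, f \<bullet> w]" if "u \<bullet> v + x \<bullet> w = 0" for u w
  proof -
    have "x \<bullet> w = - (r * (e \<bullet> u))" using that by (simp add: vr inner_commute)
    then show ?thesis by (simp add: cz_def)
  qed
  have "omega_prod R1 R2 (Fm R1 R2 (x,v)) (DFm R1 R2 (x,v) (u1,w1)) (DFm R1 R2 (x,v) (u2,w2))
     = omega_prod R1 R2 (Fm R1 R2 (g x0, g v0)) (DFm R1 R2 (g x0, g v0) (g (cz u1), g (cz w1)))
         (DFm R1 R2 (g x0, g v0) (g (cz u2), g (cz w2)))"
    by (simp only: gx gv dec)
  also have "\<dots> = omega_prod R1 R2 (Fm R1 R2 (x0, v0)) (DFm R1 R2 (x0, v0) (cz u1, cz w1))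
         (DFm R1 R2 (x0, v0) (cz u2, cz w2))"
    by (simp add: rot_F[OF rot] rot_DF[OF rot] rot_omega_prod[OF rot])
  also have "\<dots> = omega_disk (R2-R1) (x0,v0) (cz u1, cz w1) (cz u2, cz w2)"
    unfolding cu[OF assms(6)] cu[OF assms(8)] cw[OF assms(7)] cw[OF assms(9)] x0_def v0_def
    by (rule core[OF assms(1,2) r0 rr])
  also have "\<dots> = omega_disk (R2-R1) (g x0, g v0) (g (cz u1), g (cz w1)) (g (cz u2), g (cz w2))"
    by (simp add: rot_omega_disk[OF rot])
  also have "\<dots> = omega_disk (R2-R1) (x,v) (u1,w1) (u2,w2)"
    by (simp only: gx gv dec)
  finally show ?thesis .
qed

lemma unit_neq: fixes N S :: r3 assumes "N \<bullet> N = 1" "S \<bullet> S = 1" "N \<noteq> S" shows "N \<bullet> S < 1"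
proof -
  have "(N - S) \<bullet> (N - S) > 0" using assms(3) by simp
  then show ?thesis using assms(1,2) by (simp add: inner_diff_left inner_diff_right inner_commute)
qed

theorem theorem2:
  fixes R1 R2 :: real
  assumes "R1 > 0" and "R2 > 0"
  defines "s \<equiv> R2 - R1" and "lam \<equiv> 2 * sqrt (R1 * R2)"
  shows "\<exists>F :: r3 \<times> r3 \<Rightarrow> r3 \<times> r3.
           diffeo_betw F (disk_bundle lam) S2xS2_minus_diag
         \<and> (\<exists>U. open U \<and> disk_bundle lam \<subseteq> U \<and> smooth_on U F)
         \<and> (\<forall>p\<in>disk_bundle lam. \<forall>\<xi>1\<in>tangent_TS2 p. \<forall>\<xi>2\<in>tangent_TS2 p.
              omega_prod R1 R2 (F p) (frechet_derivative F (at p) \<xi>1)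
                                     (frechet_derivative F (at p) \<xi>2)
              = omega_disk s p \<xi>1 \<xi>2)
         \<and> (\<forall>g\<in>SO3. \<forall>p\<in>disk_bundle lam. F (act g p) = act g (F p))
         \<and> (\<forall>p\<in>disk_bundle lam. mu_disk s p = mu_prod R1 R2 (F p))
         \<and> (\<forall>p\<in>disk_bundle lam. H_prod R1 R2 (F p) = lam^2 / 2 - E_kin p)"
proof -
  have lamsq: "lam = sqrt (4*R1*R2)"
    unfolding lam_def by (simp add: real_sqrt_mult mult.assoc)
  have lam2: "lam^2 = 4*R1*R2" using assms(1,2) unfolding lamsq by simp
  have disk: "p \<in> disk_bundle lam \<longleftrightarrow> fst p \<bullet> fst p = 1 \<and> fst p \<bullet> snd p = 0 \<and> snd p \<bullet> snd p < 4*R1*R2" for p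
  proof -
    have "norm (snd p) < lam \<longleftrightarrow> snd p \<bullet> snd p < 4*R1*R2"
      unfolding lamsq norm_eq_sqrt_inner by simp
    then show ?thesis by (cases p) (auto simp: disk_bundle_def TS2_def norm_eq_1)
  qed
  have B: "p \<in> S2xS2_minus_diag \<longleftrightarrow> fst p \<bullet> fst p = 1 \<and> snd p \<bullet> snd p = 1 \<and> fst p \<noteq> snd p" for p
    by (cases p) (auto simp: S2xS2_minus_diag_def S2_def diag_S2_def norm_eq_1)
  define A where "A = disk_bundle lam"
  define U where "U = {p :: r3 \<times> r3. snd p \<bullet> snd p < 4*R1*R2}"
  define V where "V = {p :: r3 \<times> r3. fst p \<bullet> snd p < 1}"
  have AU: "A \<subseteq> U" by (auto simp: A_def U_def disk)
  have BV: "S2xS2_minus_diag \<subseteq> V" using unit_neq by (auto simp: V_def B)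
  have gfL: "Gm R1 R2 (Fm R1 R2 p) = p" if "p \<in> A" for p
    using GF[OF assms(1,2)] that by (cases p) (auto simp: A_def disk)
  have fgL: "Fm R1 R2 (Gm R1 R2 p) = p" if "p \<in> S2xS2_minus_diag" for p
    using FG(4)[OF assms(1,2)] that by (cases p) (auto simp: B)
  have FA: "Fm R1 R2 ` A \<subseteq> S2xS2_minus_diag"
  proof
    fix y assume "y \<in> Fm R1 R2 ` A"
    then obtain x v where xv: "(x,v) \<in> A" "y = Fm R1 R2 (x,v)" by auto
    have h: "x \<bullet> x = 1" "x \<bullet> v = 0" "v \<bullet> v < 4*R1*R2" using xv(1) by (auto simp: A_def disk)
    note N = F_N[OF assms(1,2) h]
    have "qf R1 R2 v > 0" using qf_pos[OF assms(1,2) h(3)] by simp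
    then have "fst y \<noteq> snd y" using N(3) N(1) xv(2) by auto
    then show "y \<in> S2xS2_minus_diag" using N(1,2) xv(2) by (simp add: B)
  qed
  have GB: "Gm R1 R2 ` S2xS2_minus_diag \<subseteq> A"
  proof
    fix y assume "y \<in> Gm R1 R2 ` S2xS2_minus_diag"
    then obtain N S where NS: "(N,S) \<in> S2xS2_minus_diag" "y = Gm R1 R2 (N,S)" by auto
    have h: "N \<bullet> N = 1" "S \<bullet> S = 1" "N \<noteq> S" using NS(1) by (auto simp: B)
    show "y \<in> A" using FG(1-3)[OF assms(1,2) h] NS(2) by (simp add: A_def disk)
  qed
  have bij: "bij_betw (Fm R1 R2) A S2xS2_minus_diag"
    by (rule bij_betw_byWitness[where f'="Gm R1 R2"]) (use gfL fgL FA GB in auto)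
  have inv: "inv_into A (Fm R1 R2) p = Gm R1 R2 p" if "p \<in> S2xS2_minus_diag" for p
    by (rule inv_into_f_eq[OF bij_betw_imp_inj_on[OF bij]]) (use GB fgL that in auto)
  have smF: "smooth_on U (Fm R1 R2)" unfolding U_def by (rule Fm_smooth[OF assms(1,2)])
  have smG: "smooth_on V (Gm R1 R2)" unfolding V_def by (rule Gm_smooth[OF assms(1,2)])
  have oU: "open U" unfolding U_def by (rule open_U)
  have oV: "open V" unfolding V_def by (rule open_V)
  have diffeo: "diffeo_betw (Fm R1 R2) A S2xS2_minus_diag"
    unfolding diffeo_betw_def smooth_map_on_def
    using bij oU AU smF oV BV smG inv by metis
  have symp: "omega_prod R1 R2 (Fm R1 R2 p) (frechet_derivative (Fm R1 R2) (at p) \<xi>1)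
                 (frechet_derivative (Fm R1 R2) (at p) \<xi>2) = omega_disk s p \<xi>1 \<xi>2"
    if "p \<in> A" "\<xi>1 \<in> tangent_TS2 p" "\<xi>2 \<in> tangent_TS2 p" for p \<xi>1 \<xi>2
  proof -
    obtain x v where p: "p = (x,v)" by (cases p)
    obtain u1 w1 where x1: "\<xi>1 = (u1,w1)" by (cases \<xi>1)
    obtain u2 w2 where x2: "\<xi>2 = (u2,w2)" by (cases \<xi>2)
    have h: "x \<bullet> x = 1" "x \<bullet> v = 0" "v \<bullet> v < 4*R1*R2" using that(1) p by (auto simp: A_def disk)
    have t: "x \<bullet> u1 = 0" "u1 \<bullet> v + x \<bullet> w1 = 0" "x \<bullet> u2 = 0" "u2 \<bullet> v + x \<bullet> w2 = 0"
      using that(2,3) p x1 x2 by (auto simp: tangent_TS2_def)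
    have "snd p \<bullet> snd p < 4*R1*R2" using h p by simp
    then have "(Fm R1 R2 has_derivative DFm R1 R2 p) (at p)" by (rule DF_works[OF assms(1,2)])
    then have fd: "frechet_derivative (Fm R1 R2) (at p) = DFm R1 R2 p" by (rule frechet_derivative_at[symmetric])
    show ?thesis unfolding fd unfolding p x1 x2 s_def using sympl[OF assms(1,2) h t] .
  qed
  have equi: "Fm R1 R2 (act g p) = act g (Fm R1 R2 p)" if "g \<in> SO3" for g p
    using rot_F[OF SO3_rotlike[OF that], of R1 R2 "fst p" "snd p"] by (simp add: act_def)
  have mu: "mu_disk s p = mu_prod R1 R2 (Fm R1 R2 p)" if "p \<in> A" for p
  proof -
    obtain x v where p: "p = (x,v)" by (cases p)
    have h: "v \<bullet> v \<le> 4*R1*R2" using that p by (auto simp: A_def disk)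
    show ?thesis using F_mu[OF assms(1,2) h, of x] p by (simp add: mu_disk_def mu_prod_def s_def)
  qed
  have H: "H_prod R1 R2 (Fm R1 R2 p) = lam^2 / 2 - E_kin p" if "p \<in> A" for p
  proof -
    obtain x v where p: "p = (x,v)" by (cases p)
    have h: "x \<bullet> x = 1" "x \<bullet> v = 0" "v \<bullet> v < 4*R1*R2" using that p by (auto simp: A_def disk)
    have q: "v \<bullet> v = 4*R1*R2 - (qf R1 R2 v)^2" using qf_pos[OF assms(1,2) h(3)] by simp
    have e1: "H_prod R1 R2 (Fm R1 R2 p) = (qf R1 R2 v)^2 / 2"
      using F_N(3)[OF assms(1,2) h] p by (simp add: H_prod_def)
    have e2: "lam^2 / 2 - E_kin p = (4*R1*R2)/2 - (4*R1*R2 - (qf R1 R2 v)^2) / 2"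
      using p lam2 q by (simp add: E_kin_def power2_norm_eq_inner)
    show ?thesis unfolding e1 e2 by (simp add: field_simps)
  qed
  show ?thesis
    apply (rule exI[of _ "Fm R1 R2"])
    using diffeo oU AU smF symp equi mu H unfolding A_def by blast
qed


end
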